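(* Let $x_+,x_-\in\hat A_n$ be complementary operators. Then (a) $[ia_k^\dagger a_k,[x_+,x_-]]=0$ for all $k\in\{1,\dots,n\}$, and (b) $[x_+,x_-]$ is a real linear combination of elements of the form $g_+^{(\tilde\alpha,\tilde\alpha)}=2i\,a^{(\tilde\alpha,\tilde\alpha)}$ with $\tilde\alpha\in\mathbb N_0^n$; i.e. $[x_+,x_-]\in\hat A_n^0\oplus\hat A_n^=$.
   Context: Fix $n\ge 1$. The Weyl algebra $A_n$ is the unital associative $\mathbb{C}$-algebra generated by $a_1,\dots,a_n,a_1^\dagger,\dots,a_n^\dagger$ subject to $[a_i,a_j^\dagger]=\delta_{ij}$ and $[a_i,a_j]=[a_i^\dagger,a_j^\dagger]=0$. For $\gamma=(\alpha,\beta)\in\mathbb N_0^{2n}$, $a^{\gamma}=(a_1^\dagger)^{\alpha_1}\cdots(a_n^\dagger)^{\alpha_n}a_1^{\beta_1}\cdots a_n^{\beta_n}$, $|\gamma|=\sum_j\alpha_j+\sum_j\beta_j$. The adjoint $\dagger$ is the conjugate-linear anti-automorphism with $(a_j)^\dagger=a_j^\dagger$, $(a_j^\dagger)^\dagger=a_j$. The skew-hermitian Weyl algebra is $\hat A_n=\{g\in A_n:g^\dagger=-g\}$, a real Lie algebra under the commutator; $g_+^\gamma=i((a^\gamma)^\dagger+a^\gamma)$. $\hat A_n^0$ is the real span of $2i$ and $2ia_k^\dagger a_k$; $\hat A_n^=$ is the real span of $2i\,a^{(\alpha,\alpha)}$ with $2|\alpha|\ge4$. Two elements $x_+,x_-\in\hat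 A_n$, neither lying in $\hat A_n^0\oplus\hat A_n^=$, are called complementary if for each $k\in\{1,\dots,n\}$ either (a) $[ia_k^\dagger a_k,x_\sigma]=0$ for both $\sigma\in\{+,-\}$, or (b) there is a real $\mu_k\neq0$ with $[ia_k^\dagger a_k,x_\sigma]=\sigma\mu_k x_{-\sigma}$ for both $\sigma\in\{+,-\}$ (signs identified with $\pm1$), and at least one index $k$ satisfies (b). *)

theory Defs
  imports Complex_Main
begin

text \<open>Concrete model of the Weyl algebra A_n in its normal-ordered (PBW) basis.
  The modes are indexed by a finite type 'n (so n = CARD('n) >= 1).
  A basis monomial a^(alpha,beta) = (a^dagger)^alpha a^beta is a pair of multi-indices;
  an element of A_n is a finitely supported coefficient function on such pairs.\<close>

type_synonym 'n mon = "('n \<Rightarrow> nat) \<times> ('n \<Rightarrow> nat)"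
type_synonym 'n weyl = "'n mon \<Rightarrow> complex"

definition wfin :: "'n weyl \<Rightarrow> bool" where
  "wfin x \<longleftrightarrow> finite {g. x g \<noteq> 0}"

text \<open>Coefficient of the basis monomial g in the product a^p a^q, obtained from the
  normal ordering rule a_j^m (a_j^dagger)^p = sum_k (m choose k)(p choose k) k! (a_j^dagger)^(p-k) a_j^(m-k)
  (the unique extension of the relations [a_i,a_j^dagger]=delta_ij, [a_i,a_j]=[a_i^dagger,a_j^dagger]=0).\<close>
definition nc_coeff :: "'n::finite mon \<Rightarrow> 'n mon \<Rightarrow> 'n mon \<Rightarrow> complex" where
  "nc_coeff p q g =
     (\<Sum>\<kappa> \<in> {\<kappa>. \<forall>j. \<kappa> j \<le> snd p j \<and> \<kappa> j \<le> fst q j}.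
        if g = ((\<lambda>j. fst p j + fst q j - \<kappa> j), (\<lambda>j. snd p j - \<kappa> j + snd q j))
        then of_nat (\<Prod>j\<in>UNIV. (snd p j choose \<kappa> j) * (fst q j choose \<kappa> j) * fact (\<kappa> j))
        else 0)"

definition wmult :: "'n::finite weyl \<Rightarrow> 'n weyl \<Rightarrow> 'n weyl" where
  "wmult x y = (\<lambda>g. \<Sum>p\<in>{p. x p \<noteq> 0}. \<Sum>q\<in>{q. y q \<noteq> 0}. x p * y q * nc_coeff p q g)"

definition wcomm :: "'n::finite weyl \<Rightarrow> 'n weyl \<Rightarrow> 'n weyl" where
  "wcomm x y = (\<lambda>g. wmult x y g - wmult y x g)"

definition wscale :: "complex \<Rightarrow> 'n weyl \<Rightarrow> 'n weyl" where
  "wscale c x = (\<lambda>g. c * x g)"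

definition wzero :: "'n weyl" where
  "wzero = (\<lambda>g. 0)"

definition wmon :: "'n mon \<Rightarrow> 'n weyl" where
  "wmon p = (\<lambda>g. if g = p then 1 else 0)"

definition unitidx :: "'n \<Rightarrow> ('n \<Rightarrow> nat)" where
  "unitidx k = (\<lambda>j. if j = k then 1 else 0)"

definition iN :: "'n \<Rightarrow> 'n weyl" where
  "iN k = wscale \<i> (wmon (unitidx k, unitidx k))"

definition wadj :: "'n weyl \<Rightarrow> 'n weyl" where
  "wadj x = (\<lambda>(\<alpha>, \<beta>). cnj (x (\<beta>, \<alpha>)))"

definition skew_weyl :: "'n weyl set" where
  "skew_weyl = {x. wfin x \<and> wadj x = (\<lambda>g. - x g)}"

definition hatA0 :: "'n::finite weyl set" where
  "hatA0 = {x. \<exists>(c0::real) (c::'n \<Rightarrow> real).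
      x = (\<lambda>g. of_real c0 * (2 * \<i>) * wmon (\<lambda>_. 0, \<lambda>_. 0) g
               + (\<Sum>k\<in>UNIV. of_real (c k) * (2 * \<i>) * wmon (unitidx k, unitidx k) g))}"

definition hatAeq :: "'n::finite weyl set" where
  "hatAeq = {x. \<exists>(S::('n \<Rightarrow> nat) set) (c::('n \<Rightarrow> nat) \<Rightarrow> real).
      finite S \<and> (\<forall>\<alpha>\<in>S. 2 * (\<Sum>j\<in>UNIV. \<alpha> j) \<ge> 4) \<and>
      x = (\<lambda>g. \<Sum>\<alpha>\<in>S. of_real (c \<alpha>) * (2 * \<i>) * wmon (\<alpha>, \<alpha>) g)}"

definition hatA0_eq :: "'n::finite weyl set" where
  "hatA0_eq = {(\<lambda>g. y g + z g) | y z. y \<in> hatA0 \<and> z \<in> hatAeq}"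

definition complementary :: "'n::finite weyl \<Rightarrow> 'n weyl \<Rightarrow> bool" where
  "complementary xp xm \<longleftrightarrow>
     xp \<in> skew_weyl \<and> xm \<in> skew_weyl \<and> xp \<notin> hatA0_eq \<and> xm \<notin> hatA0_eq \<and>
     (\<forall>k. (wcomm (iN k) xp = wzero \<and> wcomm (iN k) xm = wzero) \<or>
          (\<exists>\<mu>::real. \<mu> \<noteq> 0 \<and> wcomm (iN k) xp = wscale (of_real \<mu>) xm
                              \<and> wcomm (iN k) xm = wscale (of_real (- \<mu>)) xp)) \<and>
     (\<exists>k. \<exists>\<mu>::real. \<mu> \<noteq> 0 \<and> wcomm (iN k) xp = wscale (of_real \<mu>) xm
                              \<and> wcomm (iN k) xm = wscale (of_real (- \<mu>)) xp)"

end

theory Submission imports Defs "HOL-Library.FuncSet" begin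

lemma finite_bounded_funs: "finite {\<kappa>::'n::finite \<Rightarrow> nat. \<forall>j. \<kappa> j \<le> b j}"
proof -
  have "{\<kappa>::'n \<Rightarrow> nat. \<forall>j. \<kappa> j \<le> b j} = Pi\<^sub>E UNIV (\<lambda>j. {..b j})"
    by (auto simp: PiE_UNIV_domain Pi_def)
  thus ?thesis by (simp add: finite_PiE)
qed

lemma wmult_sup:
  fixes x y :: "'n::finite weyl"
  assumes "finite A" "finite B" "{p. x p \<noteq> 0} \<subseteq> A" "{q. y q \<noteq> 0} \<subseteq> B"
  shows "wmult x y g = (\<Sum>p\<in>A. \<Sum>q\<in>B. x p * y q * nc_coeff p q g)"
proof -
  have fx: "finite {p. x p \<noteq> 0}" using assms finite_subset by blast
  have fy: "finite {p. y p \<noteq> 0}" using assms finite_subset by blast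
  have "wmult x y g = (\<Sum>p\<in>A. \<Sum>q\<in>{q. y q \<noteq> 0}. x p * y q * nc_coeff p q g)"
    unfolding wmult_def by (rule sum.mono_neutral_left) (use assms in auto)
  also have "\<dots> = (\<Sum>p\<in>A. \<Sum>q\<in>B. x p * y q * nc_coeff p q g)"
    by (rule sum.cong[OF refl], rule sum.mono_neutral_left) (use assms in auto)
  finally show ?thesis .
qed

definition deg :: "'n \<Rightarrow> 'n mon \<Rightarrow> int" where
  "deg k g = int (fst g k) - int (snd g k)"

lemma nc_nz:
  assumes "nc_coeff p q g \<noteq> 0"
  obtains \<kappa> where "\<forall>j. \<kappa> j \<le> snd p j \<and> \<kappa> j \<le> fst q j"
    "g = ((\<lambda>j. fst p j + fst q j - \<kappa> j), (\<lambda>j. snd p j - \<kappa> j + snd q j))"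
proof -
  from assms obtain \<kappa> where "\<kappa> \<in> {\<kappa>. \<forall>j. \<kappa> j \<le> snd p j \<and> \<kappa> j \<le> fst q j}"
    and "(if g = ((\<lambda>j. fst p j + fst q j - \<kappa> j), (\<lambda>j. snd p j - \<kappa> j + snd q j))
        then of_nat (\<Prod>j\<in>UNIV. (snd p j choose \<kappa> j) * (fst q j choose \<kappa> j) * fact (\<kappa> j)) else (0::complex)) \<noteq> 0"
    unfolding nc_coeff_def by (rule sum.not_neutral_contains_not_neutral)
  then show ?thesis using that by (auto split: if_splits)
qed

lemma nc_deg:
  assumes "nc_coeff p q g \<noteq> 0"
  shows "deg k g = deg k p + deg k q"
proof -
  from assms obtain \<kappa> where k: "\<forall>j. \<kappa> j \<le> snd p j \<and> \<kappa> j \<le> fst q j"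
    and g: "g = ((\<lambda>j. fst p j + fst q j - \<kappa> j), (\<lambda>j. snd p j - \<kappa> j + snd q j))"
    by (rule nc_nz)
  show ?thesis using k[rule_format, of k] unfolding g deg_def by auto
qed

lemma nc_support_finite: "finite {g. nc_coeff p q (g::'n::finite mon) \<noteq> 0}"
proof -
  have "{g. nc_coeff p q g \<noteq> 0} \<subseteq> (\<lambda>\<kappa>. ((\<lambda>j. fst p j + fst q j - \<kappa> j), (\<lambda>j. snd p j - \<kappa> j + snd q j)))
          ` {\<kappa>. \<forall>j. \<kappa> j \<le> snd p j}"
  proof
    fix g assume "g \<in> {g. nc_coeff p q g \<noteq> 0}"
    hence "nc_coeff p q g \<noteq> 0" by simp
    then obtain \<kappa> where k: "\<forall>j. \<kappa> j \<le> snd p j \<and> \<kappa> j \<le> fst q j"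
      and g: "g = ((\<lambda>j. fst p j + fst q j - \<kappa> j), (\<lambda>j. snd p j - \<kappa> j + snd q j))"
      by (rule nc_nz)
    show "g \<in> (\<lambda>\<kappa>. ((\<lambda>j. fst p j + fst q j - \<kappa> j), (\<lambda>j. snd p j - \<kappa> j + snd q j)))
          ` {\<kappa>. \<forall>j. \<kappa> j \<le> snd p j}" by (rule image_eqI[where x=\<kappa>]) (use k g in auto)
  qed
  thus ?thesis using finite_bounded_funs finite_subset by blast
qed

lemma wmult_fin:
  fixes x y :: "'n::finite weyl"
  assumes "wfin x" "wfin y"
  shows "wfin (wmult x y)"
proof -
  have "{g. wmult x y g \<noteq> 0} \<subseteq> (\<Union>p\<in>{p. x p \<noteq> 0}. \<Union>q\<in>{q. y q \<noteq> 0}. {g. nc_coeff p q g \<noteq> 0})"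
  proof
    fix g assume "g \<in> {g. wmult x y g \<noteq> 0}"
    then obtain p where p: "p \<in> {p. x p \<noteq> 0}"
      "(\<Sum>q\<in>{q. y q \<noteq> 0}. x p * y q * nc_coeff p q g) \<noteq> 0"
      unfolding wmult_def by (auto elim: sum.not_neutral_contains_not_neutral)
    from p(2) obtain q where "q \<in> {q. y q \<noteq> 0}" "x p * y q * nc_coeff p q g \<noteq> 0"
      by (rule sum.not_neutral_contains_not_neutral)
    with p(1) have h: "x p \<noteq> 0" "y q \<noteq> 0" "nc_coeff p q g \<noteq> 0" by auto
    show "g \<in> (\<Union>p\<in>{p. x p \<noteq> 0}. \<Union>q\<in>{q. y q \<noteq> 0}. {g. nc_coeff p q g \<noteq> 0})"
      by (rule UN_I[of p], simp add: h(1), rule UN_I[of q], simp_all add: h)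
  qed
  moreover have "finite (\<Union>p\<in>{p. x p \<noteq> 0}. \<Union>q\<in>{q. y q \<noteq> 0}. {g. nc_coeff p q g \<noteq> 0})"
    using assms nc_support_finite unfolding wfin_def by blast
  ultimately show ?thesis unfolding wfin_def using finite_subset by blast
qed

lemma wcomm_fin:
  fixes x y :: "'n::finite weyl"
  assumes "wfin x" "wfin y"
  shows "wfin (wcomm x y)"
proof -
  have "{g. wcomm x y g \<noteq> 0} \<subseteq> {g. wmult x y g \<noteq> 0} \<union> {g. wmult y x g \<noteq> 0}"
    unfolding wcomm_def by auto
  thus ?thesis using wmult_fin[OF assms] wmult_fin[OF assms(2,1)] unfolding wfin_def
    using finite_subset by blast
qed


lemma unitidx_K: "{\<kappa>. \<forall>j. \<kappa> j \<le> unitidx k j \<and> P \<kappa> j} \<subseteq> {(\<lambda>_. 0), unitidx k}"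
proof
  fix \<kappa> assume "\<kappa> \<in> {\<kappa>. \<forall>j. \<kappa> j \<le> unitidx k j \<and> P \<kappa> j}"
  hence h: "\<forall>j. \<kappa> j \<le> unitidx k j" by auto
  show "\<kappa> \<in> {(\<lambda>_. 0), unitidx k}"
  proof (cases "\<kappa> k = 0")
    case True
    have "\<kappa> = (\<lambda>_. 0)"
    proof
      fix j have "\<kappa> j \<le> unitidx k j" using h by blast
      thus "\<kappa> j = 0" using True by (cases "j = k") (auto simp: unitidx_def)
    qed
    thus ?thesis by simp
  next
    case False
    have "\<kappa> = unitidx k"
    proof
      fix j have "\<kappa> j \<le> unitidx k j" using h by blast
      thus "\<kappa> j = unitidx k j" using False by (cases "j = k") (auto simp: unitidx_def)
    qed
    thus ?thesis by simp
  qed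
qed

lemma unitidx_ne0: "unitidx k \<noteq> (\<lambda>_. 0)"
  by (auto simp: unitidx_def fun_eq_iff)

lemma unitidx_ne0': "(\<lambda>_. 0) \<noteq> unitidx k"
  using unitidx_ne0[of k] by metis

lemma prod_unit: "(\<Prod>j\<in>UNIV. (unitidx (k::'n::finite) j choose unitidx k j) * (m j choose unitidx k j) * fact (unitidx k j)) = (m k :: nat)"
proof -
  have "(\<Prod>j\<in>UNIV. (unitidx k j choose unitidx k j) * (m j choose unitidx k j) * fact (unitidx k j)) = (\<Prod>j\<in>UNIV. if j = k then m k else 1)"
    by (rule prod.cong) (auto simp: unitidx_def)
  also have "\<dots> = m k" by simp
  finally show ?thesis .
qed

lemma NC1: "nc_coeff (unitidx k, unitidx k) q g =
   (if g = ((\<lambda>j. fst q j + unitidx k j), (\<lambda>j. snd q j + unitidx k j)) then 1 else 0)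
   + (if g = q then of_nat (fst q k) else 0)"
proof -
  let ?e = "unitidx k"
  let ?f = "\<lambda>\<kappa>. if g = ((\<lambda>j. fst (?e,?e) j + fst q j - \<kappa> j), (\<lambda>j. snd (?e,?e) j - \<kappa> j + snd q j))
        then of_nat (\<Prod>j\<in>UNIV. (snd (?e,?e) j choose \<kappa> j) * (fst q j choose \<kappa> j) * fact (\<kappa> j)) else (0::complex)"
  have "nc_coeff (?e,?e) q g = sum ?f {\<kappa>. \<forall>j. \<kappa> j \<le> snd (?e,?e) j \<and> \<kappa> j \<le> fst q j}"
    unfolding nc_coeff_def by simp
  also have "\<dots> = sum ?f {(\<lambda>_. 0), ?e}"
  proof (rule sum.mono_neutral_left)
    show "{\<kappa>. \<forall>j. \<kappa> j \<le> snd (?e,?e) j \<and> \<kappa> j \<le> fst q j} \<subseteq> {(\<lambda>_. 0), ?e}"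
      using unitidx_K[of k "\<lambda>\<kappa> j. \<kappa> j \<le> fst q j"] by simp
    show "\<forall>i\<in>{(\<lambda>_. 0), ?e} - {\<kappa>. \<forall>j. \<kappa> j \<le> snd (?e,?e) j \<and> \<kappa> j \<le> fst q j}. ?f i = 0"
    proof
      fix i assume i: "i \<in> {(\<lambda>_. 0), ?e} - {\<kappa>. \<forall>j. \<kappa> j \<le> snd (?e,?e) j \<and> \<kappa> j \<le> fst q j}"
      hence "i = ?e" by auto
      with i have "fst q k = 0" by (auto simp: unitidx_def split: if_splits)
      hence "(\<Prod>j\<in>UNIV. (snd (?e,?e) j choose i j) * (fst q j choose i j) * fact (i j)) = 0"
      proof -
        have "fst q k < ?e k" using \<open>fst q k = 0\<close> by (simp add: unitidx_def)
        thus ?thesis using \<open>i = ?e\<close> by auto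
      qed
      thus "?f i = 0" by simp
    qed
  qed simp
  also have "\<dots> = ?f (\<lambda>_. 0) + ?f ?e" using unitidx_ne0[of k] by simp
  also have "?f (\<lambda>_. 0) = (if g = ((\<lambda>j. fst q j + ?e j), (\<lambda>j. snd q j + ?e j)) then 1 else 0)"
    by (simp add: add.commute)
  also have "?f ?e = (if g = q then of_nat (fst q k) else 0)"
    unfolding snd_conv fst_conv prod_unit by simp
  finally show ?thesis .
qed

lemma NC2: "nc_coeff q (unitidx k, unitidx k) g =
   (if g = ((\<lambda>j. fst q j + unitidx k j), (\<lambda>j. snd q j + unitidx k j)) then 1 else 0)
   + (if g = q then of_nat (snd q k) else 0)"
proof -
  let ?e = "unitidx k"
  let ?f = "\<lambda>\<kappa>. if g = ((\<lambda>j. fst q j + fst (?e,?e) j - \<kappa> j), (\<lambda>j. snd q j - \<kappa> j + snd (?e,?e) j))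
        then of_nat (\<Prod>j\<in>UNIV. (snd q j choose \<kappa> j) * (fst (?e,?e) j choose \<kappa> j) * fact (\<kappa> j)) else (0::complex)"
  have "nc_coeff q (?e,?e) g = sum ?f {\<kappa>. \<forall>j. \<kappa> j \<le> snd q j \<and> \<kappa> j \<le> fst (?e,?e) j}"
    unfolding nc_coeff_def by simp
  also have "\<dots> = sum ?f {(\<lambda>_. 0), ?e}"
  proof (rule sum.mono_neutral_left)
    show "{\<kappa>. \<forall>j. \<kappa> j \<le> snd q j \<and> \<kappa> j \<le> fst (?e,?e) j} \<subseteq> {(\<lambda>_. 0), ?e}"
      using unitidx_K[of k "\<lambda>\<kappa> j. \<kappa> j \<le> snd q j"] by (auto simp: conj_commute)
    show "\<forall>i\<in>{(\<lambda>_. 0), ?e} - {\<kappa>. \<forall>j. \<kappa> j \<le> snd q j \<and> \<kappa> j \<le> fst (?e,?e) j}. ?f i = 0"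
    proof
      fix i assume i: "i \<in> {(\<lambda>_. 0), ?e} - {\<kappa>. \<forall>j. \<kappa> j \<le> snd q j \<and> \<kappa> j \<le> fst (?e,?e) j}"
      hence "i = ?e" by auto
      with i have "snd q k = 0" by (auto simp: unitidx_def split: if_splits)
      have "(\<lambda>j. (snd q j choose ?e j) * (?e j choose ?e j) * fact (?e j)) = (\<lambda>j. if j = k then snd q k else 1)"
        by (auto simp: unitidx_def fun_eq_iff)
      hence "(\<Prod>j\<in>UNIV. (snd q j choose i j) * (fst (?e,?e) j choose i j) * fact (i j)) = 0"
      proof -
        have "snd q k < ?e k" using \<open>snd q k = 0\<close> by (simp add: unitidx_def)
        thus ?thesis using \<open>i = ?e\<close> by auto
      qed
      thus "?f i = 0" by simp
    qed
  qed simp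
  also have "\<dots> = ?f (\<lambda>_. 0) + ?f ?e" using unitidx_ne0[of k] by simp
  also have "?f (\<lambda>_. 0) = (if g = ((\<lambda>j. fst q j + ?e j), (\<lambda>j. snd q j + ?e j)) then 1 else 0)"
    by simp
  also have "?f ?e = (if g = q then of_nat (snd q k) else 0)"
  proof -
    have p: "(\<lambda>j. (snd q j choose ?e j) * (?e j choose ?e j) * fact (?e j)) = (\<lambda>j. if j = k then snd q k else 1)"
      by (auto simp: unitidx_def fun_eq_iff)
    show ?thesis
    proof (cases "snd q k = 0")
      case True
      have z: "(\<Prod>j\<in>UNIV. (snd q j choose ?e j) * (?e j choose ?e j) * fact (?e j)) = 0"
        unfolding p using True by simp
      show ?thesis unfolding snd_conv fst_conv z using True by simp
    next
      case False
      have "(\<lambda>j. snd q j - ?e j + ?e j) = snd q" using False by (auto simp: unitidx_def fun_eq_iff)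
      moreover have "(\<lambda>j. fst q j + ?e j - ?e j) = fst q" by auto
      moreover have "(\<Prod>j\<in>UNIV. (snd q j choose ?e j) * (?e j choose ?e j) * fact (?e j)) = snd q k"
        unfolding p by simp
      ultimately show ?thesis unfolding snd_conv fst_conv by simp
    qed
  qed
  finally show ?thesis .
qed


lemma iN_supp: "{p. iN k p \<noteq> 0} \<subseteq> {(unitidx k, unitidx k)}"
  by (auto simp: iN_def wscale_def wmon_def split: if_splits)

lemma ad_iN:
  fixes x :: "'n::finite weyl"
  assumes "wfin x"
  shows "wcomm (iN k) x g = \<i> * of_int (deg k g) * x g"
proof -
  let ?e = "unitidx k"
  let ?S = "{q. x q \<noteq> 0}"
  have fS: "finite ?S" using assms by (simp add: wfin_def)
  have iNe: "iN k (?e,?e) = \<i>" by (simp add: iN_def wscale_def wmon_def)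
  have m1: "wmult (iN k) x g = (\<Sum>q\<in>?S. \<i> * x q * nc_coeff (?e,?e) q g)"
  proof -
    have "wmult (iN k) x g = (\<Sum>p\<in>{(?e,?e)}. \<Sum>q\<in>?S. iN k p * x q * nc_coeff p q g)"
      by (rule wmult_sup) (use fS iN_supp[of k] in auto)
    thus ?thesis by (simp add: iNe)
  qed
  have m2: "wmult x (iN k) g = (\<Sum>q\<in>?S. \<i> * x q * nc_coeff q (?e,?e) g)"
  proof -
    have "wmult x (iN k) g = (\<Sum>p\<in>?S. \<Sum>q\<in>{(?e,?e)}. x p * iN k q * nc_coeff p q g)"
      by (rule wmult_sup) (use fS iN_supp[of k] in auto)
    thus ?thesis by (simp add: iNe mult_ac)
  qed
  have "wcomm (iN k) x g = (\<Sum>q\<in>?S. \<i> * x q * (nc_coeff (?e,?e) q g - nc_coeff q (?e,?e) g))"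
    unfolding wcomm_def m1 m2 by (simp add: sum_subtractf[symmetric] algebra_simps)
  also have "\<dots> = (\<Sum>q\<in>?S. if q = g then \<i> * x g * (of_nat (fst g k) - of_nat (snd g k)) else 0)"
    by (rule sum.cong[OF refl]) (simp add: NC1 NC2)
  also have "\<dots> = \<i> * of_int (deg k g) * x g"
    by (cases "x g = 0") (simp_all add: fS deg_def mult_ac)
  finally show ?thesis .
qed

lemma alg:
  fixes dp dq P1 M1 P2 M2 m :: complex
  assumes "\<i>*dp*P1 = m*M1" "\<i>*dp*M1 = -m*P1" "\<i>*dq*P2 = m*M2" "\<i>*dq*M2 = -m*P2"
  shows "\<i>*(dp+dq)*(P1*M2 - M1*P2) = 0"
proof -
  have "\<i>*(dp+dq)*(P1*M2 - M1*P2) = (\<i>*dp*P1)*M2 + P1*(\<i>*dq*M2) - (\<i>*dp*M1)*P2 - M1*(\<i>*dq*P2)"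
    by (simp add: algebra_simps)
  also have "\<dots> = 0" unfolding assms by (simp add: algebra_simps)
  finally show ?thesis .
qed

lemma partA:
  fixes xp xm :: "'n::finite weyl"
  assumes fp: "wfin xp" and fm: "wfin xm"
    and h: "\<forall>p. \<i>*of_int (deg k p)*xp p = m*xm p \<and> \<i>*of_int (deg k p)*xm p = -m*xp p"
  shows "\<i> * of_int (deg k g) * wcomm xp xm g = 0"
proof -
  let ?A = "{p. xp p \<noteq> 0} \<union> {p. xm p \<noteq> 0}"
  have fA: "finite ?A" using fp fm by (simp add: wfin_def)
  have "wcomm xp xm g = (\<Sum>p\<in>?A. \<Sum>q\<in>?A. (xp p * xm q - xm p * xp q) * nc_coeff p q g)"
  proof -
    have 1: "wmult xp xm g = (\<Sum>p\<in>?A. \<Sum>q\<in>?A. xp p * xm q * nc_coeff p q g)"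
      by (rule wmult_sup) (use fA in auto)
    have 2: "wmult xm xp g = (\<Sum>p\<in>?A. \<Sum>q\<in>?A. xm p * xp q * nc_coeff p q g)"
      by (rule wmult_sup) (use fA in auto)
    show ?thesis unfolding wcomm_def 1 2
      by (simp add: sum_subtractf[symmetric] algebra_simps)
  qed
  hence "\<i> * of_int (deg k g) * wcomm xp xm g =
     (\<Sum>p\<in>?A. \<Sum>q\<in>?A. \<i> * of_int (deg k g) * (xp p * xm q - xm p * xp q) * nc_coeff p q g)"
    by (simp add: sum_distrib_left mult_ac)
  also have "\<dots> = 0"
  proof (intro sum.neutral ballI)
    fix p q
    show "\<i> * of_int (deg k g) * (xp p * xm q - xm p * xp q) * nc_coeff p q g = 0"
    proof (cases "nc_coeff p q g = 0")
      case False
      hence "deg k g = deg k p + deg k q" by (rule nc_deg)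
      moreover have "\<i>*(of_int (deg k p) + of_int (deg k q))*(xp p*xm q - xm p*xp q) = 0"
        using spec[OF h, of p] spec[OF h, of q] by (intro alg[where m=m]) (simp_all only: conj_assoc)
      ultimately show ?thesis by simp
    qed simp
  qed
  finally show ?thesis .
qed

definition sw :: "'n mon \<Rightarrow> 'n mon" where "sw g = (snd g, fst g)"

lemma sw_sw[simp]: "sw (sw g) = g" by (simp add: sw_def)
lemma inj_sw: "inj sw" by (metis injI sw_sw)
lemma wadj_sw: "wadj x g = cnj (x (sw g))" by (cases g) (simp add: wadj_def sw_def)

lemma nc_sw: "nc_coeff (sw q) (sw p) (sw g) = nc_coeff p q g"
proof -
  have S: "{\<kappa>. \<forall>j. \<kappa> j \<le> fst q j \<and> \<kappa> j \<le> snd p j} = {\<kappa>. \<forall>j. \<kappa> j \<le> snd p j \<and> \<kappa> j \<le> fst q j}"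
    by auto
  have T: "(if (snd g, fst g) = ((\<lambda>j. snd q j + snd p j - \<kappa> j), (\<lambda>j. fst q j - \<kappa> j + fst p j))
         then of_nat (\<Prod>j\<in>UNIV. (fst q j choose \<kappa> j) * (snd p j choose \<kappa> j) * fact (\<kappa> j)) else 0) =
        (if g = ((\<lambda>j. fst p j + fst q j - \<kappa> j), (\<lambda>j. snd p j - \<kappa> j + snd q j))
         then of_nat (\<Prod>j\<in>UNIV. (snd p j choose \<kappa> j) * (fst q j choose \<kappa> j) * fact (\<kappa> j)) else (0::complex))"
    if "\<kappa> \<in> {\<kappa>. \<forall>j. \<kappa> j \<le> snd p j \<and> \<kappa> j \<le> fst q j}" for \<kappa>
  proof -
    from that have k: "\<forall>j. \<kappa> j \<le> snd p j \<and> \<kappa> j \<le> fst q j" by simp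
    have e1: "(\<lambda>j. snd q j + snd p j - \<kappa> j) = (\<lambda>j. snd p j - \<kappa> j + snd q j)" using k by (auto simp: fun_eq_iff)
    have e2: "(\<lambda>j. fst q j - \<kappa> j + fst p j) = (\<lambda>j. fst p j + fst q j - \<kappa> j)" using k by (auto simp: fun_eq_iff)
    show ?thesis unfolding e1 e2 by (cases g) (simp add: mult_ac)
  qed
  show ?thesis unfolding nc_coeff_def sw_def fst_conv snd_conv S by (rule sum.cong[OF refl], rule T)
qed

lemma nc_real: "cnj (nc_coeff p q g) = nc_coeff p q g"
  unfolding nc_coeff_def by (subst cnj_sum, rule sum.cong[OF refl], simp)

lemma wadj_mult:
  fixes x y :: "'n::finite weyl"
  assumes "wfin x" "wfin y"
  shows "wadj (wmult x y) g = wmult (wadj y) (wadj x) g"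
proof -
  let ?X = "{p. x p \<noteq> 0}" and ?Y = "{p. y p \<noteq> 0}"
  have fX: "finite ?X" and fY: "finite ?Y" using assms by (auto simp: wfin_def)
  have sY: "{p. wadj y p \<noteq> 0} \<subseteq> sw ` ?Y"
  proof
    fix p assume "p \<in> {p. wadj y p \<noteq> 0}"
    hence "y (sw p) \<noteq> 0" by (simp add: wadj_sw)
    thus "p \<in> sw ` ?Y" by (intro image_eqI[where x="sw p"]) simp_all
  qed
  have sX: "{p. wadj x p \<noteq> 0} \<subseteq> sw ` ?X"
  proof
    fix p assume "p \<in> {p. wadj x p \<noteq> 0}"
    hence "x (sw p) \<noteq> 0" by (simp add: wadj_sw)
    thus "p \<in> sw ` ?X" by (intro image_eqI[where x="sw p"]) simp_all
  qed
  have "wmult (wadj y) (wadj x) g = (\<Sum>q\<in>sw ` ?Y. \<Sum>p\<in>sw ` ?X. wadj y q * wadj x p * nc_coeff q p g)"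
    by (rule wmult_sup) (use fX fY sX sY in auto)
  also have "\<dots> = (\<Sum>q\<in>?Y. \<Sum>p\<in>?X. cnj (y q) * cnj (x p) * nc_coeff p q (sw g))"
    by (simp add: sum.reindex[OF inj_on_subset[OF inj_sw]] wadj_sw nc_sw[of _ _ "sw g", simplified])
  also have "\<dots> = (\<Sum>p\<in>?X. \<Sum>q\<in>?Y. cnj (x p) * cnj (y q) * nc_coeff p q (sw g))"
    by (subst sum.swap) (simp add: mult_ac)
  also have "\<dots> = wadj (wmult x y) g"
    by (simp add: wadj_sw wmult_def cnj_sum nc_real)
  finally show ?thesis by simp
qed

lemma wmult_neg: "wmult (\<lambda>g. - x g) (\<lambda>g. - y g) = wmult x y"
  unfolding wmult_def by simp

lemma comm_skew:
  fixes x y :: "'n::finite weyl"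
  assumes "x \<in> skew_weyl" "y \<in> skew_weyl"
  shows "wadj (wcomm x y) g = - wcomm x y g"
proof -
  have f: "wfin x" "wfin y" and a: "wadj x = (\<lambda>g. - x g)" "wadj y = (\<lambda>g. - y g)"
    using assms by (auto simp: skew_weyl_def)
  have "wadj (wcomm x y) g = wadj (wmult x y) g - wadj (wmult y x) g"
    by (simp add: wadj_sw wcomm_def)
  also have "\<dots> = wmult y x g - wmult x y g"
    using f by (simp add: wadj_mult a wmult_neg)
  finally show ?thesis by (simp add: wcomm_def)
qed


lemma sum_one_unit:
  fixes \<alpha> :: "'n::finite \<Rightarrow> nat"
  assumes "(\<Sum>j\<in>UNIV. \<alpha> j) = 1"
  shows "\<exists>k. \<alpha> = unitidx k"
proof -
  obtain k where k: "\<alpha> k \<noteq> 0" using assms by (metis sum.neutral zero_neq_one)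
  have s: "(\<Sum>j\<in>UNIV. \<alpha> j) = \<alpha> k + (\<Sum>j\<in>UNIV - {k}. \<alpha> j)"
    by (simp add: sum.remove)
  hence "\<alpha> k = 1" "(\<Sum>j\<in>UNIV - {k}. \<alpha> j) = 0" using assms k by linarith+
  hence "\<forall>j\<in>UNIV - {k}. \<alpha> j = 0" by simp
  hence "\<alpha> = unitidx k" using \<open>\<alpha> k = 1\<close> by (auto simp: unitidx_def fun_eq_iff)
  thus ?thesis by blast
qed

lemma sum_unitidx: "(\<Sum>j\<in>(UNIV::'n::finite set). unitidx k j) = 1"
  by (simp add: unitidx_def)

lemma unitidx_inj: "unitidx k = unitidx k' \<longleftrightarrow> k = k'"
  by (auto simp: unitidx_def fun_eq_iff)

lemma imag_form: "cnj c = - c \<Longrightarrow> c = complex_of_real (Im c / 2) * (2 * \<i>)"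
  by (simp add: complex_eq_iff)

theorem lemma7:
  fixes xp xm :: "'n::finite weyl"
  assumes "complementary xp xm"
  shows "(\<forall>k. wcomm (iN k) (wcomm xp xm) = wzero) \<and> wcomm xp xm \<in> hatA0_eq"
proof -
  have sp: "xp \<in> skew_weyl" and sm: "xm \<in> skew_weyl" using assms by (auto simp: complementary_def)
  hence fp: "wfin xp" and fm: "wfin xm" by (auto simp: skew_weyl_def)
  let ?w = "wcomm xp xm"
  have fw: "wfin ?w" using wcomm_fin[OF fp fm] .
  have dz: "\<i> * of_int (deg k g) * ?w g = 0" for k g
  proof -
    from assms have "(wcomm (iN k) xp = wzero \<and> wcomm (iN k) xm = wzero) \<or>
          (\<exists>\<mu>::real. \<mu> \<noteq> 0 \<and> wcomm (iN k) xp = wscale (of_real \<mu>) xm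
                              \<and> wcomm (iN k) xm = wscale (of_real (- \<mu>)) xp)"
      unfolding complementary_def by blast
    then obtain m where "\<forall>p. \<i>*of_int (deg k p)*xp p = m*xm p \<and> \<i>*of_int (deg k p)*xm p = -m*xp p"
    proof
      assume "wcomm (iN k) xp = wzero \<and> wcomm (iN k) xm = wzero"
      hence "\<forall>p. \<i>*of_int (deg k p)*xp p = 0*xm p \<and> \<i>*of_int (deg k p)*xm p = -0*xp p"
        using ad_iN[OF fp, of k] ad_iN[OF fm, of k] by (metis wzero_def mult_zero_left minus_zero)
      thus ?thesis using that by blast
    next
      assume "\<exists>\<mu>::real. \<mu> \<noteq> 0 \<and> wcomm (iN k) xp = wscale (of_real \<mu>) xm
                              \<and> wcomm (iN k) xm = wscale (of_real (- \<mu>)) xp"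
      then obtain \<mu> :: real where "wcomm (iN k) xp = wscale (of_real \<mu>) xm"
                              "wcomm (iN k) xm = wscale (of_real (- \<mu>)) xp" by blast
      hence "\<forall>p. \<i>*of_int (deg k p)*xp p = of_real \<mu>*xm p \<and> \<i>*of_int (deg k p)*xm p = -of_real \<mu>*xp p"
        using ad_iN[OF fp, of k] ad_iN[OF fm, of k] by (simp add: wscale_def fun_eq_iff)
      thus ?thesis using that by blast
    qed
    thus ?thesis by (rule partA[OF fp fm])
  qed
  have A: "\<forall>k. wcomm (iN k) ?w = wzero"
    using dz by (simp add: ad_iN[OF fw] wzero_def fun_eq_iff)
  have F1: "fst g = snd g" if "?w g \<noteq> 0" for g
  proof -
    have "deg k g = 0" for k using dz[of k g] that by simp
    thus ?thesis by (auto simp: deg_def fun_eq_iff)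
  qed
  define r where "r \<alpha> = Im (?w (\<alpha>, \<alpha>)) / 2" for \<alpha>
  have F2: "?w (\<alpha>, \<alpha>) = complex_of_real (r \<alpha>) * (2 * \<i>)" for \<alpha>
  proof -
    have "cnj (?w (\<alpha>, \<alpha>)) = - ?w (\<alpha>, \<alpha>)"
      using comm_skew[OF sp sm, of "(\<alpha>,\<alpha>)"] by (simp add: wadj_def)
    thus ?thesis unfolding r_def by (rule imag_form)
  qed
  define S where "S = {\<alpha>. ?w (\<alpha>, \<alpha>) \<noteq> 0 \<and> 2 \<le> (\<Sum>j\<in>UNIV. \<alpha> j)}"
  have fS: "finite S"
  proof -
    have "S \<subseteq> fst ` {g. ?w g \<noteq> 0}" unfolding S_def by (auto intro: image_eqI[of _ fst "(_,_)"])
    thus ?thesis using fw unfolding wfin_def using finite_subset by blast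
  qed
  define y where "y = (\<lambda>g. of_real (r (\<lambda>_. 0)) * (2 * \<i>) * wmon (\<lambda>_. 0, \<lambda>_. 0) g
               + (\<Sum>k\<in>UNIV. of_real (r (unitidx k)) * (2 * \<i>) * wmon (unitidx k, unitidx k) g))"
  define z where "z = (\<lambda>g. \<Sum>\<alpha>\<in>S. of_real (r \<alpha>) * (2 * \<i>) * wmon (\<alpha>, \<alpha>) g)"
  have yA: "y \<in> hatA0" unfolding hatA0_def y_def
    by (rule CollectI, rule exI[of _ "r (\<lambda>_. 0)"], rule exI[of _ "\<lambda>k. r (unitidx k)"], rule refl)
  have zA: "z \<in> hatAeq" unfolding hatAeq_def z_def
    by (rule CollectI, rule exI[of _ S], rule exI[of _ r]) (use fS in \<open>auto simp: S_def\<close>)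
  have eq: "?w = (\<lambda>g. y g + z g)"
  proof
    fix g :: "'n mon"
    obtain a b where g: "g = (a,b)" by (cases g)
    show "?w g = y g + z g"
    proof (cases "a = b")
      case False
      hence "?w g = 0" using F1 g by fastforce
      moreover have "y g = 0" "z g = 0" using False g by (auto simp: y_def z_def wmon_def intro!: sum.neutral)
      ultimately show ?thesis by simp
    next
      case True
      have zg: "z g = (if a \<in> S then of_real (r a) * (2 * \<i>) else 0)"
      proof -
        have "z g = (\<Sum>\<alpha>\<in>S. if \<alpha> = b then of_real (r \<alpha>) * (2 * \<i>) else 0)"
          unfolding z_def g True wmon_def by (rule sum.cong) auto
        also have "\<dots> = (if b \<in> S then of_real (r b) * (2 * \<i>) else 0)" using fS by simp
        finally show ?thesis using True by simp
      qed
      consider "(\<Sum>j\<in>UNIV. a j) = 0" | "(\<Sum>j\<in>UNIV. a j) = 1" | "(\<Sum>j\<in>UNIV. a j) \<ge> 2" by linarith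
      thus ?thesis
      proof cases
        case 1
        hence a0: "a = (\<lambda>_. 0)" by (auto simp: fun_eq_iff)
        have gg: "g = (\<lambda>_. 0, \<lambda>_. 0)" using g True a0 by simp
        have ys: "y g = of_real (r (\<lambda>_. 0)) * (2 * \<i>) * wmon (\<lambda>_. 0, \<lambda>_. 0) g
               + (\<Sum>k\<in>UNIV. of_real (r (unitidx k)) * (2 * \<i>) * wmon (unitidx k, unitidx k) g)"
          by (simp only: y_def)
        have s0: "(\<Sum>k\<in>UNIV. of_real (r (unitidx k)) * (2 * \<i>) * wmon (unitidx k, unitidx k) g) = 0"
          by (rule sum.neutral) (simp add: gg wmon_def unitidx_ne0' unitidx_ne0)
        have "y g = of_real (r a) * (2 * \<i>)"
          unfolding ys s0 by (simp add: gg a0 wmon_def)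
        moreover have "a \<notin> S" using 1 by (simp add: S_def)
        ultimately show ?thesis using zg F2 g True by simp
      next
        case 2
        then obtain k where ak: "a = unitidx k" using sum_one_unit by blast
        have gg: "g = (unitidx k, unitidx k)" using g True ak by simp
        have ys: "y g = of_real (r (\<lambda>_. 0)) * (2 * \<i>) * wmon (\<lambda>_. 0, \<lambda>_. 0) g
               + (\<Sum>k\<in>UNIV. of_real (r (unitidx k)) * (2 * \<i>) * wmon (unitidx k, unitidx k) g)"
          by (simp only: y_def)
        have w0: "wmon (\<lambda>_. 0, \<lambda>_. 0) g = 0" by (simp add: gg wmon_def unitidx_ne0' unitidx_ne0)
        have "y g = (\<Sum>k'\<in>UNIV. if k' = k then of_real (r a) * (2 * \<i>) else 0)"
          unfolding ys w0 by (simp only: mult_zero_right add_0_left, rule sum.cong) (auto simp: gg ak wmon_def unitidx_inj)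
        also have "\<dots> = of_real (r a) * (2 * \<i>)" by simp
        finally have "y g = of_real (r a) * (2 * \<i>)" .
        moreover have "a \<notin> S" using 2 by (simp add: S_def)
        ultimately show ?thesis using zg F2 g True by simp
      next
        case 3
        have "a \<noteq> (\<lambda>_. 0)" using 3 by auto
        moreover have "a \<noteq> unitidx k" for k using 3 sum_unitidx[of k] by auto
        ultimately have "y g = 0" unfolding y_def g True wmon_def by (auto intro!: sum.neutral)
        moreover have "z g = ?w g"
        proof (cases "?w g = 0")
          case True
          hence "r a = 0" unfolding r_def using g \<open>a = b\<close> by simp
          thus ?thesis using zg True by simp
        next
          case False
          hence "a \<in> S" using 3 g \<open>a = b\<close> by (simp add: S_def)
          thus ?thesis using zg F2 g \<open>a = b\<close> by simp
        qed
        ultimately show ?thesis by simp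
      qed
    qed
  qed
  have "?w \<in> hatA0_eq" unfolding hatA0_eq_def eq using yA zA by blast
  with A show ?thesis by blast
qed

end
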